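(* Let $\mathbf{P}_1,\mathbf{P}_2\subseteq\mathbb{Z}^n$ be $\mathbb{N}$-generated sets with a non-degenerate intersection. Then for all $\mathbf{p}_1\in\mathbf{P}_1$ and $\mathbf{p}_2\in\mathbf{P}_2$ there exist $\mathbf{p}_1'\in\mathbf{P}_1$ and $\mathbf{p}_2'\in\mathbf{P}_2$ such that $\mathbf{p}_1+\mathbf{p}_1'=\mathbf{p}_2+\mathbf{p}_2'$.
   Context: A set is $\mathbb{N}$-generated if it is the set $\mathbb{N}(\mathbf{G})$ of finite $\mathbb{N}$-linear combinations of some set $\mathbf{G}$. Dimension of $\mathbf{X}\subseteq\mathbb{Q}^n$: least $k$ such that $\mathbf{X}\subseteq\bigcup_{i=1}^r(\mathbf{b}_i+\mathbf{V}_i)$ for finitely many $\mathbf{b}_i\in\mathbb{Q}^n$ and vector subspaces $\mathbf{V}_i$ of dimension $\le k$. $\mathbf{X}_1,\mathbf{X}_2$ have a non-degenerate intersection if $\dim(\mathbf{X}_1\cap\mathbf{X}_2)=\dim(\mathbf{X}_1)=\dim(\mathbf{X}_2)$. *)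

theory Defs
  imports "HOL-Analysis.Analysis"
begin

definition nat_comb :: "(int ^ 'n) set \<Rightarrow> (int ^ 'n) set" where
  "nat_comb G = {x. \<exists>S c. finite S \<and> S \<subseteq> G \<and>
                     x = (\<Sum>g\<in>S. int (c g) *s g)}"

definition N_generated :: "(int ^ 'n) set \<Rightarrow> bool" where
  "N_generated P \<longleftrightarrow> (\<exists>G. P = nat_comb G)"

definition to_rat_vec :: "int ^ 'n \<Rightarrow> rat ^ 'n" where
  "to_rat_vec x = (\<chi> i. of_int (x $ i))"

definition covered_dim :: "(rat ^ 'n) set \<Rightarrow> nat \<Rightarrow> bool" where
  "covered_dim X k \<longleftrightarrow> (\<exists>L :: ((rat ^ 'n) \<times> (rat ^ 'n) set) list.
      (\<forall>(b, V) \<in> set L. vec.subspace V \<and> vec.dim V \<le> k) \<and>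
      X \<subseteq> (\<Union>(b, V) \<in> set L. (\<lambda>v. b + v) ` V))"

definition qdim :: "(rat ^ 'n) set \<Rightarrow> nat" where
  "qdim X = (LEAST k. covered_dim X k)"

definition zdim :: "(int ^ 'n) set \<Rightarrow> nat" where
  "zdim X = qdim (to_rat_vec ` X)"

definition nondegenerate_intersection :: "(int ^ 'n) set \<Rightarrow> (int ^ 'n) set \<Rightarrow> bool" where
  "nondegenerate_intersection X1 X2 \<longleftrightarrow>
     zdim (X1 \<inter> X2) = zdim X1 \<and> zdim X1 = zdim X2"

end

theory Submission
  imports Defs
begin

definition monoidset :: "'a::monoid_add set \<Rightarrow> bool" where
  "monoidset M \<longleftrightarrow> 0 \<in> M \<and> (\<forall>x\<in>M. \<forall>y\<in>M. x + y \<in> M)"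

lemma monoidset_natmul:
  fixes M :: "('a::comm_ring_1 ^ 'n) set"
  assumes "monoidset M" "x \<in> M"
  shows "of_nat k *s x \<in> M"
proof (induction k)
  case 0
  then show ?case using assms by (simp add: monoidset_def)
next
  case (Suc k)
  have "of_nat (Suc k) *s x = x + of_nat k *s x"
    by (simp add: vec_eq_iff algebra_simps)
  then show ?case using Suc assms by (simp add: monoidset_def)
qed

lemma nat_comb_monoid: "monoidset (nat_comb G)"
  unfolding monoidset_def
proof (intro conjI ballI)
  show "0 \<in> nat_comb G" unfolding nat_comb_def
    by (rule CollectI, rule exI[of _ "{}"]) simp
next
  fix x y assume "x \<in> nat_comb G" "y \<in> nat_comb G"
  then obtain S1 c1 S2 c2 where S: "finite S1" "S1 \<subseteq> G" "x = (\<Sum>g\<in>S1. int (c1 g) *s g)"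
     "finite S2" "S2 \<subseteq> G" "y = (\<Sum>g\<in>S2. int (c2 g) *s g)"
    unfolding nat_comb_def by blast
  define c where "c g = (if g \<in> S1 then c1 g else 0) + (if g \<in> S2 then c2 g else 0)" for g
  have e1: "(\<Sum>g\<in>S1 \<union> S2. int (if g \<in> S1 then c1 g else 0) *s g) = x"
  proof -
    have "(\<Sum>g\<in>S1 \<union> S2. int (if g \<in> S1 then c1 g else 0) *s g)
        = (\<Sum>g\<in>S1 \<union> S2. if g \<in> S1 then int (c1 g) *s g else 0)"
      by (intro sum.cong) auto
    also have "\<dots> = (\<Sum>g\<in>(S1 \<union> S2) \<inter> S1. int (c1 g) *s g)"
      by (rule sum.inter_restrict[symmetric]) (use S in simp)
    also have "(S1 \<union> S2) \<inter> S1 = S1" by blast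
    finally show ?thesis using S by simp
  qed
  have e2: "(\<Sum>g\<in>S1 \<union> S2. int (if g \<in> S2 then c2 g else 0) *s g) = y"
  proof -
    have "(\<Sum>g\<in>S1 \<union> S2. int (if g \<in> S2 then c2 g else 0) *s g)
        = (\<Sum>g\<in>S1 \<union> S2. if g \<in> S2 then int (c2 g) *s g else 0)"
      by (intro sum.cong) auto
    also have "\<dots> = (\<Sum>g\<in>(S1 \<union> S2) \<inter> S2. int (c2 g) *s g)"
      by (rule sum.inter_restrict[symmetric]) (use S in simp)
    also have "(S1 \<union> S2) \<inter> S2 = S2" by blast
    finally show ?thesis using S by simp
  qed
  have "(\<Sum>g\<in>S1 \<union> S2. int (c g) *s g) = (\<Sum>g\<in>S1 \<union> S2. int (if g \<in> S1 then c1 g else 0) *s g + int (if g \<in> S2 then c2 g else 0) *s g)"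
    by (intro sum.cong) (auto simp: c_def vec_eq_iff algebra_simps)
  also have "\<dots> = x + y" using e1 e2 by (simp add: sum.distrib)
  finally have xy: "x + y = (\<Sum>g\<in>S1 \<union> S2. int (c g) *s g)" by simp
  have "finite (S1 \<union> S2) \<and> S1 \<union> S2 \<subseteq> G \<and> x + y = (\<Sum>g\<in>S1 \<union> S2. int (c g) *s g)"
    using S xy by simp
  then show "x + y \<in> nat_comb G" unfolding nat_comb_def by (intro CollectI exI)
qed

lemma to_rat_vec_add: "to_rat_vec (x + y) = to_rat_vec x + to_rat_vec y"
  by (simp add: to_rat_vec_def vec_eq_iff)
lemma to_rat_vec_0: "to_rat_vec 0 = 0"
  by (simp add: to_rat_vec_def vec_eq_iff)
lemma to_rat_vec_inj: "to_rat_vec x = to_rat_vec y \<Longrightarrow> x = y"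
  by (simp add: to_rat_vec_def vec_eq_iff)
lemma to_rat_vec_natmul: "to_rat_vec (of_nat k *s x) = of_nat k *s to_rat_vec x"
  by (simp add: to_rat_vec_def vec_eq_iff)

lemma monoidset_image: "monoidset M \<Longrightarrow> monoidset (to_rat_vec ` M)"
proof -
  assume M: "monoidset M"
  show ?thesis unfolding monoidset_def
  proof (intro conjI ballI)
    show "0 \<in> to_rat_vec ` M" using M to_rat_vec_0 unfolding monoidset_def by (metis image_eqI)
  next
    fix u v assume "u \<in> to_rat_vec ` M" "v \<in> to_rat_vec ` M"
    then obtain x y where "x \<in> M" "y \<in> M" "u = to_rat_vec x" "v = to_rat_vec y" by blast
    then have "u + v = to_rat_vec (x + y)" "x + y \<in> M"
      using M unfolding monoidset_def by (auto simp: to_rat_vec_add)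
    then show "u + v \<in> to_rat_vec ` M" by (metis image_eqI)
  qed
qed

lemma monoid_cover:
  fixes M :: "(rat ^ 'n) set"
  assumes "monoidset M" "\<forall>(b,V)\<in>set L. vec.subspace V"
    "M \<subseteq> (\<Union>(b, V) \<in> set L. (\<lambda>v. b + v) ` V)"
  shows "\<exists>(b,V)\<in>set L. M \<subseteq> V"
  using assms(2,3)
proof (induction L)
  case Nil
  then show ?case using assms(1) by (auto simp: monoidset_def)
next
  case (Cons bV L)
  obtain b V where bV: "bV = (b, V)" by force
  show ?case
  proof (cases "M \<subseteq> V")
    case True then show ?thesis using bV by auto
  next
    case False
    then obtain m where m: "m \<in> M" "m \<notin> V" by blast
    have "M \<subseteq> (\<Union>(b, V) \<in> set L. (\<lambda>v. b + v) ` V)"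
    proof
      fix x assume x: "x \<in> M"
      define f where "f j = x + of_nat j *s m" for j :: nat
      have fM: "f j \<in> M" for j
        using x m assms(1) monoidset_natmul[OF assms(1) m(1)] unfolding f_def monoidset_def by blast
      have "(UNIV :: nat set) = (\<Union>(b', V') \<in> set (bV # L). {j. f j \<in> (\<lambda>v. b' + v) ` V'})"
        using fM Cons.prems(2) by blast
      then have "\<not> finite (\<Union>(b', V') \<in> set (bV # L). {j. f j \<in> (\<lambda>v. b' + v) ` V'})"
        by (metis infinite_UNIV_nat)
      then obtain b' V' where bV': "(b', V') \<in> set (bV # L)"
        and inf: "infinite {j. f j \<in> (\<lambda>v. b' + v) ` V'}"
        using bV by auto
      obtain j1 where j1: "j1 \<in> {j. f j \<in> (\<lambda>v. b' + v) ` V'}"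
        using inf by (metis finite.emptyI ex_in_conv)
      obtain j2 where j2: "j2 \<in> {j. f j \<in> (\<lambda>v. b' + v) ` V'}" "j2 \<noteq> j1"
        using inf by (metis (no_types, lifting) finite_insert infinite_imp_nonempty insert_Diff_single
            Diff_iff empty_iff ex_in_conv singletonI)
      obtain v1 where v1: "v1 \<in> V'" "f j1 = b' + v1" using j1 by auto
      obtain v2 where v2: "v2 \<in> V'" "f j2 = b' + v2" using j2 by auto
      have sub: "vec.subspace V'" using Cons.prems(1) bV' by auto
      have "v1 - v2 \<in> V'" using sub v1 v2 by (simp add: vec.subspace_diff)
      moreover have "v1 - v2 = (of_nat j1 - of_nat j2) *s m"
      proof -
        have "v1 - v2 = f j1 - f j2" unfolding v1(2) v2(2) by (rule add_diff_cancel_left[symmetric])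
        also have "\<dots> = (of_nat j1 - of_nat j2) *s m"
          unfolding f_def by (simp add: vec_eq_iff algebra_simps)
        finally show ?thesis .
      qed
      ultimately have "(of_nat j1 - of_nat j2) *s m \<in> V'" by simp
      then have "inverse (of_nat j1 - of_nat j2 :: rat) *s ((of_nat j1 - of_nat j2) *s m) \<in> V'"
        by (rule vec.subspace_scale[OF sub])
      moreover have c0: "(of_nat j1 - of_nat j2 :: rat) \<noteq> 0" using j2(2) by simp
      moreover have "inverse (of_nat j1 - of_nat j2 :: rat) *s ((of_nat j1 - of_nat j2) *s m) = m"
        unfolding vector_smult_assoc using c0 by simp
      ultimately have mV': "m \<in> V'" by simp
      then have "(b', V') \<in> set L" using bV' bV m(2) by auto
      moreover have "x = b' + (v1 - of_nat j1 *s m)"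
      proof -
        have "x = f j1 - of_nat j1 *s m" unfolding f_def by simp
        also have "\<dots> = b' + (v1 - of_nat j1 *s m)" unfolding v1(2) by (rule add_diff_eq[symmetric])
        finally show ?thesis .
      qed
      moreover have "v1 - of_nat j1 *s m \<in> V'"
        by (rule vec.subspace_diff[OF sub v1(1) vec.subspace_scale[OF sub mV']])
      ultimately show "x \<in> (\<Union>(b, V) \<in> set L. (\<lambda>v. b + v) ` V)" by blast
    qed
    then obtain b'' V'' where "(b'', V'') \<in> set L" "M \<subseteq> V''"
      using Cons.IH Cons.prems(1) by fastforce
    then show ?thesis by auto
  qed
qed


lemma covered_self: "covered_dim (M :: (rat ^ 'n) set) (vec.dim M)"
  unfolding covered_dim_def
  by (rule exI[of _ "[(0, vec.span M)]"]) (auto simp: vec.subspace_span vec.span_base)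

lemma covered_ge:
  fixes M :: "(rat ^ 'n) set"
  assumes "monoidset M" "covered_dim M k"
  shows "vec.dim M \<le> k"
proof -
  obtain L :: "((rat ^ 'n) \<times> (rat ^ 'n) set) list" where
    L: "\<forall>(b, V) \<in> set L. vec.subspace V \<and> vec.dim V \<le> k"
       "M \<subseteq> (\<Union>(b, V) \<in> set L. (\<lambda>v. b + v) ` V)"
    using assms(2) unfolding covered_dim_def by blast
  have "\<forall>(b,V)\<in>set L. vec.subspace V" using L(1) by auto
  then obtain b V where "(b, V) \<in> set L" "M \<subseteq> V"
    using monoid_cover[OF assms(1) _ L(2)] by auto
  then show ?thesis using L(1) vec.dim_subset[of M V] by fastforce
qed

lemma qdim_monoid:
  fixes M :: "(rat ^ 'n) set"
  assumes "monoidset M"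
  shows "qdim M = vec.dim M"
  unfolding qdim_def
  by (rule Least_equality[of "\<lambda>k. covered_dim M k", OF covered_self covered_ge[OF assms]])

lemma grp1: "(X::'a::ab_group_add) + (A - B) = (A + X) - B" by (simp add: algebra_simps)
lemma grp2: "(X::'a::ab_group_add) + (A - B) = A - (B + - X)" by (simp add: algebra_simps)

lemma case_pos: fixes x a b :: "rat^'n" and q p :: int assumes "p \<ge> 0"
 shows "(of_int p * of_nat D) *s x + of_nat (nat q) *s (a - b) = (of_nat (nat q) *s a + of_nat (nat \<bar>p\<bar> * D) *s x) - of_nat (nat q) *s b"
proof -
  have s: "(of_nat (nat \<bar>p\<bar> * D) :: rat) = of_int p * of_nat D" using assms by simp
  show ?thesis unfolding s vec.scale_right_diff_distrib by (rule grp1)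
qed
lemma case_neg: fixes x a b :: "rat^'n" and q p :: int assumes "\<not> p \<ge> 0"
 shows "(of_int p * of_nat D) *s x + of_nat (nat q) *s (a - b) = of_nat (nat q) *s a - (of_nat (nat q) *s b + of_nat (nat \<bar>p\<bar> * D) *s x)"
proof -
  have s: "(of_nat (nat \<bar>p\<bar> * D) :: rat) = - (of_int p * of_nat D)" using assms by simp
  show ?thesis unfolding s vec.scale_right_diff_distrib vec.scale_minus_left by (rule grp2)
qed
lemma key_lemma: fixes x y :: "rat^'n" and q :: int
 shows "of_nat (nat q * D) *s (c *s x + y) = (of_nat (nat q * D) * c) *s x + of_nat (nat q) *s (of_nat D *s y)"
  by (simp add: vec_eq_iff algebra_simps)
lemma key_scalar: fixes q :: int assumes "q > 0" "c = of_int p / of_int q"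
  shows "(of_nat (nat q * D) * c :: rat) = of_int p * of_nat D"
  using assms by (simp add: field_simps)

lemma span_rep:
  fixes M :: "(rat ^ 'n) set"
  assumes "monoidset M" "v \<in> vec.span M"
  shows "\<exists>D::nat. D > 0 \<and> (\<exists>a\<in>M. \<exists>b\<in>M. of_nat D *s v = a - b)"
  using assms(2)
proof (induction rule: vec.span_induct_alt)
  case base
  have "(of_nat 1 :: rat) *s (0 :: rat^'n) = 0 - 0" by simp
  then show ?case using assms(1) unfolding monoidset_def by (metis zero_less_one)
next
  case (step c x y)
  then obtain D a b where D: "D > 0" "a \<in> M" "b \<in> M" "of_nat D *s y = a - b" by blast
  obtain p q where pq: "quotient_of c = (p, q)" by force
  have c: "c = of_int p / of_int q" using quotient_of_div[OF pq] .
  have q: "q > 0" using quotient_of_denom_pos[OF pq] .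
  define D' where "D' = nat q * D"
  have D'pos: "D' > 0" using q D(1) unfolding D'_def by simp
  have key: "of_nat D' *s (c *s x + y) = (of_int p * of_nat D) *s x + of_nat (nat q) *s (a - b)"
    unfolding D'_def key_lemma key_scalar[OF q c] D(4) ..
  have qa: "of_nat (nat q) *s a \<in> M" and qb: "of_nat (nat q) *s b \<in> M"
    using monoidset_natmul[OF assms(1)] D by auto
  have xM: "of_nat (nat \<bar>p\<bar> * D) *s x \<in> M" using monoidset_natmul[OF assms(1) step(1)] .
  show ?case
  proof (cases "p \<ge> 0")
    case True
    have eq: "of_nat D' *s (c *s x + y) = (of_nat (nat q) *s a + of_nat (nat \<bar>p\<bar> * D) *s x) - of_nat (nat q) *s b"
      unfolding key using True by (rule case_pos)
    have mem: "of_nat (nat q) *s a + of_nat (nat \<bar>p\<bar> * D) *s x \<in> M"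
      using assms(1) qa xM unfolding monoidset_def by blast
    show ?thesis by (rule exI[of _ D'], rule conjI[OF D'pos], rule bexI[OF _ mem], rule bexI[OF _ qb], rule eq)
  next
    case False
    have eq: "of_nat D' *s (c *s x + y) = of_nat (nat q) *s a - (of_nat (nat q) *s b + of_nat (nat \<bar>p\<bar> * D) *s x)"
      unfolding key using False by (rule case_neg)
    have mem: "of_nat (nat q) *s b + of_nat (nat \<bar>p\<bar> * D) *s x \<in> M"
      using assms(1) qb xM unfolding monoidset_def by blast
    show ?thesis by (rule exI[of _ D'], rule conjI[OF D'pos], rule bexI[OF _ qa], rule bexI[OF _ mem], rule eq)
  qed
qed


lemma suc_smul: "(of_nat (Suc k) :: 'a::comm_ring_1) *s (x :: 'a^'n) = x + of_nat k *s x"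
  by (simp add: vec_eq_iff algebra_simps)

lemma rearr: fixes u v a b :: "rat^'n"
  assumes "of_nat D *s (u - v) = a - b"
  shows "of_nat D *s u + b = of_nat D *s v + a"
proof -
  have "of_nat D *s u - of_nat D *s v = a - b"
    using assms by (simp only: vec.scale_right_diff_distrib)
  then show ?thesis by (simp add: algebra_simps)
qed

theorem mainTheorem19:
  fixes P1 P2 :: "(int ^ 'n) set"
  assumes "N_generated P1" and "N_generated P2"
    and "nondegenerate_intersection P1 P2"
  shows "\<forall>p1\<in>P1. \<forall>p2\<in>P2. \<exists>p1'\<in>P1. \<exists>p2'\<in>P2. p1 + p1' = p2 + p2'"
proof (intro ballI)
  fix p1 p2 assume p1: "p1 \<in> P1" and p2: "p2 \<in> P2"
  have m1: "monoidset P1" using assms(1) nat_comb_monoid unfolding N_generated_def by blast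
  have m2: "monoidset P2" using assms(2) nat_comb_monoid unfolding N_generated_def by blast
  have m12: "monoidset (P1 \<inter> P2)" using m1 m2 unfolding monoidset_def by blast
  define A where "A = to_rat_vec ` P1"
  define B where "B = to_rat_vec ` P2"
  define C where "C = to_rat_vec ` (P1 \<inter> P2)"
  have mA: "monoidset A" unfolding A_def by (rule monoidset_image[OF m1])
  have mB: "monoidset B" unfolding B_def by (rule monoidset_image[OF m2])
  have mC: "monoidset C" unfolding C_def by (rule monoidset_image[OF m12])
  have d1: "vec.dim C = vec.dim A" and d2: "vec.dim A = vec.dim B"
    using assms(3) unfolding nondegenerate_intersection_def zdim_def
    using qdim_monoid[OF mA] qdim_monoid[OF mB] qdim_monoid[OF mC]
    unfolding A_def B_def C_def by auto
  have "C \<subseteq> A" unfolding A_def C_def by blast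
  then have sA: "vec.span C = vec.span A" using d1 by (intro vec.dim_eq_span) simp_all
  have "C \<subseteq> B" unfolding B_def C_def by blast
  then have sB: "vec.span C = vec.span B" using d1 d2 by (intro vec.dim_eq_span) simp_all
  have "to_rat_vec p1 \<in> vec.span C" unfolding sA A_def using p1 by (simp add: vec.span_base)
  moreover have "to_rat_vec p2 \<in> vec.span C" unfolding sB B_def using p2 by (simp add: vec.span_base)
  ultimately have "to_rat_vec p1 - to_rat_vec p2 \<in> vec.span C" by (rule vec.span_diff)
  then obtain D a b where D: "D > 0" "a \<in> C" "b \<in> C"
    "of_nat D *s (to_rat_vec p1 - to_rat_vec p2) = a - b"
    using span_rep[OF mC] by blast
  obtain a0 b0 where ab: "a0 \<in> P1 \<inter> P2" "b0 \<in> P1 \<inter> P2" "a = to_rat_vec a0" "b = to_rat_vec b0"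
    using D(2,3) unfolding C_def by blast
  have "to_rat_vec (of_nat D *s p1 + b0) = to_rat_vec (of_nat D *s p2 + a0)"
    using rearr[OF D(4)] ab(3,4) by (simp add: to_rat_vec_add to_rat_vec_natmul)
  then have eq: "of_nat D *s p1 + b0 = of_nat D *s p2 + a0" by (rule to_rat_vec_inj)
  obtain E where E: "D = Suc E" using D(1) gr0_implies_Suc by blast
  have q1: "of_nat E *s p1 + b0 \<in> P1"
    using m1 monoidset_natmul[OF m1 p1] ab(2) unfolding monoidset_def by blast
  have q2: "of_nat E *s p2 + a0 \<in> P2"
    using m2 monoidset_natmul[OF m2 p2] ab(1) unfolding monoidset_def by blast
  have "p1 + (of_nat E *s p1 + b0) = p2 + (of_nat E *s p2 + a0)"
    using eq unfolding E suc_smul by (simp add: add.assoc)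
  then show "\<exists>p1'\<in>P1. \<exists>p2'\<in>P2. p1 + p1' = p2 + p2'" using q1 q2 by blast
qed

end
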